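(* For all $n\ge 2$, $HT_n=\ker(\varphi_{HT})$ is isomorphic to $HL_n=\ker(\psi_H)$.
   Context: For $n\ge 2$, the twisted virtual braid group $TVB_n$ is the group with generators $\sigma_1,\dots,\sigma_{n-1}$, $\rho_1,\dots,\rho_{n-1}$, $\gamma_1,\dots,\gamma_n$ and defining relations: $\sigma_i\sigma_{i+1}\sigma_i=\sigma_{i+1}\sigma_i\sigma_{i+1}$ ($1\le i\le n-2$); $\sigma_i\sigma_j=\sigma_j\sigma_i$ ($|i-j|\ge 2$); $\rho_i^2=1$; $\rho_i\rho_j=\rho_j\rho_i$ ($|i-j|\ge2$); $\rho_i\rho_{i+1}\rho_i=\rho_{i+1}\rho_i\rho_{i+1}$ ($1\le i\le n-2$); $\sigma_i\rho_j=\rho_j\sigma_i$ ($|i-j|\ge 2$); $\rho_i\rho_{i+1}\sigma_i=\sigma_{i+1}\rho_i\rho_{i+1}$ ($1\le i\le n-2$); $\gamma_i^2=1$ and $\gamma_i\gamma_j=\gamma_j\gamma_i$ (all $i,j$); $\gamma_j\rho_i=\rho_i\gamma_j$ and $\gamma_j\sigma_i=\sigma_i\gamma_j$ for $j\notin\{i,i+1\}$; $\rho_i\gamma_i=\gamma_{i+1}\rho_i$ ($1\le i\le n-1$); $\rho_i\sigma_i\rho_i=\gamma_{i+1}\gamma_i\sigma_i\gamma_i\gamma_{i+1}$ ($1\le i\le n-1$). $TVH_n$ is the kernel of $\varphi_H:TVB_n\to S_n$, $\sigma_i\mapsto e$, $\rho_i\mapsto(i,i+1)$, $\gamma_j\mapsto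 e$. In $TVB_n$ define $x_{i,i+1}=\sigma_i$, $x_{i+1,i}=\rho_i\sigma_i\rho_i$ ($1\le i\le n-1$), and for $1\le i<j-1\le n-1$: $x_{ij}=\rho_{j-1}\cdots\rho_{i+1}\sigma_i\rho_{i+1}\cdots\rho_{j-1}$, $x_{ji}=\rho_{j-1}\cdots\rho_{i+1}\rho_i\sigma_i\rho_i\rho_{i+1}\cdots\rho_{j-1}$; these together with the $\gamma_j$ generate $TVH_n$. $A_n=\langle\gamma_1,\dots,\gamma_n\rangle$; $\psi_H:TVH_n\to A_n$ is the homomorphism with $x_{kl}\mapsto e$, $\gamma_j\mapsto\gamma_j$; $HL_n=\ker\psi_H$. $TS_n=\langle\rho_1,\dots,\rho_{n-1},\gamma_1,\dots,\gamma_n\rangle\le TVB_n$, and $\varphi_{HT}:TVB_n\to TS_n$ is the homomorphism $\sigma_i\mapsto e$, $\rho_i\mapsto\rho_i$, $\gamma_j\mapsto\gamma_j$; $HT_n=\ker\varphi_{HT}$. *)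

theory Defs
  imports "HOL-Algebra.Sym_Groups" "HOL-Algebra.Generated_Groups"
begin

text \<open>A word is a list of letters (g, True) = g and (g, False) = g inverse.\<close>
type_synonym 'g word = "('g \<times> bool) list"

inductive_set pres_eq :: "('g word \<times> 'g word) set \<Rightarrow> ('g word \<times> 'g word) set"
  for R :: "('g word \<times> 'g word) set" where
  base: "(u, v) \<in> R \<Longrightarrow> (u, v) \<in> pres_eq R"
| cancel: "([(g, b), (g, \<not> b)], []) \<in> pres_eq R"
| refl: "(u, u) \<in> pres_eq R"
| sym: "(u, v) \<in> pres_eq R \<Longrightarrow> (v, u) \<in> pres_eq R"
| trans: "(u, v) \<in> pres_eq R \<Longrightarrow> (v, w) \<in> pres_eq R \<Longrightarrow> (u, w) \<in> pres_eq R"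
| ctxt: "(u, v) \<in> pres_eq R \<Longrightarrow> (a @ u @ b, a @ v @ b) \<in> pres_eq R"

definition words_on :: "'g set \<Rightarrow> 'g word set" where
  "words_on S = {w. fst ` set w \<subseteq> S}"

definition pres_rel :: "'g set \<Rightarrow> ('g word \<times> 'g word) set \<Rightarrow> ('g word \<times> 'g word) set" where
  "pres_rel S R = pres_eq R \<inter> (words_on S \<times> words_on S)"

definition presented_group :: "'g set \<Rightarrow> ('g word \<times> 'g word) set \<Rightarrow> 'g word set monoid" where
  "presented_group S R =
     \<lparr> carrier = words_on S // pres_rel S R,
       mult = (\<lambda>P Q. {z. \<exists>x\<in>P. \<exists>y\<in>Q. (x @ y, z) \<in> pres_rel S R}),
       one = pres_rel S R `` {[]} \<rparr>"

definition pres_elt :: "'g set \<Rightarrow> ('g word \<times> 'g word) set \<Rightarrow> 'g word \<Rightarrow> 'g word set" where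
  "pres_elt S R w = pres_rel S R `` {w}"

datatype tvb_gen = Sig nat | Rho nat | Gam nat

definition tvb_gens :: "nat \<Rightarrow> tvb_gen set" where
  "tvb_gens n = {Sig i | i. 1 \<le> i \<and> i \<le> n - 1} \<union> {Rho i | i. 1 \<le> i \<and> i \<le> n - 1}
                \<union> {Gam j | j. 1 \<le> j \<and> j \<le> n}"

abbreviation ws :: "nat \<Rightarrow> tvb_gen word" where "ws i \<equiv> [(Sig i, True)]"
abbreviation wr :: "nat \<Rightarrow> tvb_gen word" where "wr i \<equiv> [(Rho i, True)]"
abbreviation wg :: "nat \<Rightarrow> tvb_gen word" where "wg i \<equiv> [(Gam i, True)]"

definition tvb_rels :: "nat \<Rightarrow> (tvb_gen word \<times> tvb_gen word) set" where
  "tvb_rels n =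
     {(ws i @ ws (i+1) @ ws i, ws (i+1) @ ws i @ ws (i+1)) | i. 1 \<le> i \<and> i \<le> n - 2}
   \<union> {(ws i @ ws j, ws j @ ws i) | i j. 1 \<le> i \<and> i \<le> n - 1 \<and> 1 \<le> j \<and> j \<le> n - 1
          \<and> (i + 2 \<le> j \<or> j + 2 \<le> i)}
   \<union> {(wr i @ wr i, []) | i. 1 \<le> i \<and> i \<le> n - 1}
   \<union> {(wr i @ wr j, wr j @ wr i) | i j. 1 \<le> i \<and> i \<le> n - 1 \<and> 1 \<le> j \<and> j \<le> n - 1
          \<and> (i + 2 \<le> j \<or> j + 2 \<le> i)}
   \<union> {(wr i @ wr (i+1) @ wr i, wr (i+1) @ wr i @ wr (i+1)) | i. 1 \<le> i \<and> i \<le> n - 2}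
   \<union> {(ws i @ wr j, wr j @ ws i) | i j. 1 \<le> i \<and> i \<le> n - 1 \<and> 1 \<le> j \<and> j \<le> n - 1
          \<and> (i + 2 \<le> j \<or> j + 2 \<le> i)}
   \<union> {(wr i @ wr (i+1) @ ws i, ws (i+1) @ wr i @ wr (i+1)) | i. 1 \<le> i \<and> i \<le> n - 2}
   \<union> {(wg i @ wg i, []) | i. 1 \<le> i \<and> i \<le> n}
   \<union> {(wg i @ wg j, wg j @ wg i) | i j. 1 \<le> i \<and> i \<le> n \<and> 1 \<le> j \<and> j \<le> n}
   \<union> {(wg j @ wr i, wr i @ wg j) | i j. 1 \<le> i \<and> i \<le> n - 1 \<and> 1 \<le> j \<and> j \<le> n
          \<and> j \<noteq> i \<and> j \<noteq> i + 1}
   \<union> {(wg j @ ws i, ws i @ wg j) | i j. 1 \<le> i \<and> i \<le> n - 1 \<and> 1 \<le> j \<and> j \<le> n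
          \<and> j \<noteq> i \<and> j \<noteq> i + 1}
   \<union> {(wr i @ wg i, wg (i+1) @ wr i) | i. 1 \<le> i \<and> i \<le> n - 1}
   \<union> {(wr i @ ws i @ wr i, wg (i+1) @ wg i @ ws i @ wg i @ wg (i+1)) | i. 1 \<le> i \<and> i \<le> n - 1}"

definition TVB :: "nat \<Rightarrow> tvb_gen word set monoid" where
  "TVB n = presented_group (tvb_gens n) (tvb_rels n)"

definition tvb_elt :: "nat \<Rightarrow> tvb_gen word \<Rightarrow> tvb_gen word set" where
  "tvb_elt n w = pres_elt (tvb_gens n) (tvb_rels n) w"

definition sigma :: "nat \<Rightarrow> nat \<Rightarrow> tvb_gen word set" where "sigma n i = tvb_elt n (ws i)"
definition rho :: "nat \<Rightarrow> nat \<Rightarrow> tvb_gen word set" where "rho n i = tvb_elt n (wr i)"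
definition gamma :: "nat \<Rightarrow> nat \<Rightarrow> tvb_gen word set" where "gamma n j = tvb_elt n (wg j)"

definition x_word :: "nat \<Rightarrow> nat \<Rightarrow> tvb_gen word" where
  "x_word k l =
     (if k < l then concat (map wr (rev [k+1..<l])) @ ws k @ concat (map wr [k+1..<l])
      else concat (map wr (rev [l+1..<k])) @ wr l @ ws l @ wr l @ concat (map wr [l+1..<k]))"

definition xgen :: "nat \<Rightarrow> nat \<Rightarrow> nat \<Rightarrow> tvb_gen word set" where
  "xgen n k l = tvb_elt n (x_word k l)"

definition TS :: "nat \<Rightarrow> tvb_gen word set monoid" where
  "TS n = subgroup_generated (TVB n)
            ({rho n i | i. 1 \<le> i \<and> i \<le> n - 1} \<union> {gamma n j | j. 1 \<le> j \<and> j \<le> n})"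

definition A :: "nat \<Rightarrow> tvb_gen word set monoid" where
  "A n = subgroup_generated (TVB n) {gamma n j | j. 1 \<le> j \<and> j \<le> n}"

definition is_phi_H :: "nat \<Rightarrow> (tvb_gen word set \<Rightarrow> nat \<Rightarrow> nat) \<Rightarrow> bool" where
  "is_phi_H n h \<longleftrightarrow> h \<in> hom (TVB n) (sym_group n)
     \<and> (\<forall>i. 1 \<le> i \<and> i \<le> n - 1 \<longrightarrow> h (sigma n i) = id \<and> h (rho n i) = Transposition.transpose i (i+1))
     \<and> (\<forall>j. 1 \<le> j \<and> j \<le> n \<longrightarrow> h (gamma n j) = id)"

definition TVH :: "nat \<Rightarrow> (tvb_gen word set \<Rightarrow> nat \<Rightarrow> nat) \<Rightarrow> tvb_gen word set monoid" where
  "TVH n h = (TVB n)\<lparr>carrier := kernel (TVB n) (sym_group n) h\<rparr>"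

definition is_phi_HT :: "nat \<Rightarrow> (tvb_gen word set \<Rightarrow> tvb_gen word set) \<Rightarrow> bool" where
  "is_phi_HT n h \<longleftrightarrow> h \<in> hom (TVB n) (TS n)
     \<and> (\<forall>i. 1 \<le> i \<and> i \<le> n - 1 \<longrightarrow> h (sigma n i) = \<one>\<^bsub>TVB n\<^esub> \<and> h (rho n i) = rho n i)
     \<and> (\<forall>j. 1 \<le> j \<and> j \<le> n \<longrightarrow> h (gamma n j) = gamma n j)"

definition is_psi_H :: "nat \<Rightarrow> (tvb_gen word set \<Rightarrow> nat \<Rightarrow> nat) \<Rightarrow> (tvb_gen word set \<Rightarrow> tvb_gen word set) \<Rightarrow> bool" where
  "is_psi_H n phiH h \<longleftrightarrow> h \<in> hom (TVH n phiH) (A n)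
     \<and> (\<forall>k l. 1 \<le> k \<and> k \<le> n \<and> 1 \<le> l \<and> l \<le> n \<and> k \<noteq> l \<longrightarrow> h (xgen n k l) = \<one>\<^bsub>TVB n\<^esub>)
     \<and> (\<forall>j. 1 \<le> j \<and> j \<le> n \<longrightarrow> h (gamma n j) = gamma n j)"

end

theory Submission
  imports Defs
begin


lemma words_on_append[simp]: "u @ v \<in> words_on S \<longleftrightarrow> u \<in> words_on S \<and> v \<in> words_on S"
  by (auto simp: words_on_def)
lemma words_on_Nil[simp]: "[] \<in> words_on S"
  by (auto simp: words_on_def)
lemma words_on_Cons[simp]: "a # v \<in> words_on S \<longleftrightarrow> fst a \<in> S \<and> v \<in> words_on S"
  by (auto simp: words_on_def)

lemma pres_rel_equiv: "equiv (words_on S) (pres_rel S R)"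
proof (rule equivI)
  show "pres_rel S R \<subseteq> words_on S \<times> words_on S" by (auto simp: pres_rel_def)
  show "refl_on (words_on S) (pres_rel S R)" by (rule refl_onI) (simp add: pres_rel_def pres_eq.refl)
  show "sym (pres_rel S R)" by (rule symI) (simp add: pres_rel_def pres_eq.sym)
  show "trans (pres_rel S R)" by (rule transI) (auto simp: pres_rel_def intro: pres_eq.trans)
qed

lemma pres_eq_app: "(u,u') \<in> pres_eq R \<Longrightarrow> (v,v') \<in> pres_eq R \<Longrightarrow> (u@v, u'@v') \<in> pres_eq R"
proof -
  assume a: "(u,u') \<in> pres_eq R" and b: "(v,v') \<in> pres_eq R"
  have "([] @ u @ v, [] @ u' @ v) \<in> pres_eq R" by (rule pres_eq.ctxt[OF a])
  moreover have "(u' @ v @ [], u' @ v' @ []) \<in> pres_eq R" by (rule pres_eq.ctxt[OF b])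
  ultimately show ?thesis by (auto intro: pres_eq.trans)
qed

lemma pres_mult:
  assumes "u \<in> words_on S" "v \<in> words_on S"
  shows "pres_elt S R u \<otimes>\<^bsub>presented_group S R\<^esub> pres_elt S R v = pres_elt S R (u @ v)"
proof -
  have "(x @ y, z) \<in> pres_rel S R \<longleftrightarrow> (u @ v, z) \<in> pres_rel S R"
    if "(u, x) \<in> pres_rel S R" "(v, y) \<in> pres_rel S R" for x y z
  proof -
    have "(u @ v, x @ y) \<in> pres_rel S R" using that pres_eq_app unfolding pres_rel_def by auto
    then show ?thesis using pres_rel_equiv[of S R] unfolding equiv_def sym_def trans_def by blast
  qed
  moreover have "(u, u) \<in> pres_rel S R" "(v, v) \<in> pres_rel S R"
    using assms by (auto simp: pres_rel_def intro: pres_eq.refl)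
  ultimately have "{z. \<exists>x\<in>pres_rel S R `` {u}. \<exists>y\<in>pres_rel S R `` {v}. (x @ y, z) \<in> pres_rel S R}
      = pres_rel S R `` {u @ v}"
    by blast
  then show ?thesis
    unfolding presented_group_def pres_elt_def by simp
qed

lemma pres_carrier: "carrier (presented_group S R) = pres_elt S R ` words_on S"
  by (auto simp: presented_group_def pres_elt_def quotient_def)

lemma pres_one: "\<one>\<^bsub>presented_group S R\<^esub> = pres_elt S R []"
  by (simp add: presented_group_def pres_elt_def)

lemma pres_elt_eq: "(u, v) \<in> pres_eq R \<Longrightarrow> u \<in> words_on S \<Longrightarrow> v \<in> words_on S \<Longrightarrow>
   pres_elt S R u = pres_elt S R v"
  unfolding pres_elt_def
  by (rule equiv_class_eq[OF pres_rel_equiv]) (auto simp: pres_rel_def)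

definition winv :: "'g word \<Rightarrow> 'g word" where
  "winv w = rev (map (\<lambda>(g,b). (g, \<not> b)) w)"

lemma winv_words[simp]: "winv w \<in> words_on S \<longleftrightarrow> w \<in> words_on S"
proof -
  have "fst ` set (winv w) = fst ` set w"
    unfolding winv_def by (simp add: image_image case_prod_beta)
  then show ?thesis by (simp add: words_on_def)
qed

lemma winv_cancel: "(winv w @ w, []) \<in> pres_eq R"
proof (induction w)
  case Nil then show ?case by (simp add: winv_def pres_eq.refl)
next
  case (Cons a w)
  obtain g b where a: "a = (g, b)" by force
  have c: "([(g, \<not> b), (g, \<not>\<not> b)], []) \<in> pres_eq R" by (rule pres_eq.cancel)
  have "(winv w @ [(g, \<not> b), (g, b)] @ w, winv w @ [] @ w) \<in> pres_eq R"
    using pres_eq.ctxt[OF c] by simp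
  then show ?case using Cons a by (auto simp: winv_def intro: pres_eq.trans)
qed

lemma pres_group: "group (presented_group S R)"
proof (rule groupI)
  show "\<one>\<^bsub>presented_group S R\<^esub> \<in> carrier (presented_group S R)"
    by (simp add: pres_one pres_carrier)
next
  fix x y assume "x \<in> carrier (presented_group S R)" "y \<in> carrier (presented_group S R)"
  then show "x \<otimes>\<^bsub>presented_group S R\<^esub> y \<in> carrier (presented_group S R)"
    by (auto simp: pres_carrier pres_mult)
next
  fix x y z assume "x \<in> carrier (presented_group S R)" "y \<in> carrier (presented_group S R)"
     "z \<in> carrier (presented_group S R)"
  then show "x \<otimes>\<^bsub>presented_group S R\<^esub> y \<otimes>\<^bsub>presented_group S R\<^esub> z =
    x \<otimes>\<^bsub>presented_group S R\<^esub> (y \<otimes>\<^bsub>presented_group S R\<^esub> z)"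
    by (auto simp: pres_carrier pres_mult)
next
  fix x assume "x \<in> carrier (presented_group S R)"
  then show "\<one>\<^bsub>presented_group S R\<^esub> \<otimes>\<^bsub>presented_group S R\<^esub> x = x"
    by (auto simp: pres_carrier pres_mult pres_one)
next
  fix x assume "x \<in> carrier (presented_group S R)"
  then obtain w where w: "w \<in> words_on S" "x = pres_elt S R w" by (auto simp: pres_carrier)
  show "\<exists>y\<in>carrier (presented_group S R). y \<otimes>\<^bsub>presented_group S R\<^esub> x = \<one>\<^bsub>presented_group S R\<^esub>"
  proof (intro bexI)
    show "pres_elt S R (winv w) \<otimes>\<^bsub>presented_group S R\<^esub> x = \<one>\<^bsub>presented_group S R\<^esub>"
      using w by (simp add: pres_mult pres_one pres_elt_eq[OF winv_cancel])
  qed (use w in \<open>simp add: pres_carrier\<close>)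
qed

lemma pres_inv:
  assumes "g \<in> S"
  shows "pres_elt S R [(g, False)] = inv\<^bsub>presented_group S R\<^esub> (pres_elt S R [(g, True)])"
proof -
  interpret P: group "presented_group S R" by (rule pres_group)
  have c: "([(g, False), (g, \<not> False)], []) \<in> pres_eq R" by (rule pres_eq.cancel)
  have "pres_elt S R [(g, False)] \<otimes>\<^bsub>presented_group S R\<^esub> pres_elt S R [(g, True)] = \<one>\<^bsub>presented_group S R\<^esub>"
    using assms c by (simp add: pres_mult pres_one pres_elt_eq)
  moreover have "pres_elt S R [(g, b)] \<in> carrier (presented_group S R)" for b
    using assms by (simp add: pres_carrier)
  ultimately show ?thesis by (metis P.inv_equality)
qed



locale tvrel = group G for G (structure) +
  fixes n :: nat and s r g :: "nat \<Rightarrow> 'a"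
  assumes s_c: "\<lbrakk>1 \<le> i; i \<le> n - 1\<rbrakk> \<Longrightarrow> s i \<in> carrier G"
  and r_c: "\<lbrakk>1 \<le> i; i \<le> n - 1\<rbrakk> \<Longrightarrow> r i \<in> carrier G"
  and g_c: "\<lbrakk>1 \<le> i; i \<le> n\<rbrakk> \<Longrightarrow> g i \<in> carrier G"
  and rr: "\<lbrakk>1 \<le> i; i \<le> n - 1\<rbrakk> \<Longrightarrow> r i \<otimes> r i = \<one>"
  and rcomm: "\<lbrakk>1 \<le> i; i \<le> n - 1; 1 \<le> j; j \<le> n - 1; i + 2 \<le> j \<or> j + 2 \<le> i\<rbrakk>
      \<Longrightarrow> r i \<otimes> r j = r j \<otimes> r i"
  and rbraid: "\<lbrakk>1 \<le> i; i \<le> n - 2\<rbrakk> \<Longrightarrow> r i \<otimes> r (i+1) \<otimes> r i = r (i+1) \<otimes> r i \<otimes> r (i+1)"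
  and srcomm: "\<lbrakk>1 \<le> i; i \<le> n - 1; 1 \<le> j; j \<le> n - 1; i + 2 \<le> j \<or> j + 2 \<le> i\<rbrakk>
      \<Longrightarrow> s i \<otimes> r j = r j \<otimes> s i"
  and mixed: "\<lbrakk>1 \<le> i; i \<le> n - 2\<rbrakk> \<Longrightarrow> r i \<otimes> r (i+1) \<otimes> s i = s (i+1) \<otimes> r i \<otimes> r (i+1)"
  and gg: "\<lbrakk>1 \<le> i; i \<le> n\<rbrakk> \<Longrightarrow> g i \<otimes> g i = \<one>"
  and grcomm: "\<lbrakk>1 \<le> i; i \<le> n - 1; 1 \<le> j; j \<le> n; j \<noteq> i; j \<noteq> i + 1\<rbrakk>
      \<Longrightarrow> g j \<otimes> r i = r i \<otimes> g j"
  and rg: "\<lbrakk>1 \<le> i; i \<le> n - 1\<rbrakk> \<Longrightarrow> r i \<otimes> g i = g (i+1) \<otimes> r i"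
begin

lemma rr': "\<lbrakk>1 \<le> i; i \<le> n - 1; x \<in> carrier G\<rbrakk> \<Longrightarrow> r i \<otimes> (r i \<otimes> x) = x"
  by (simp add: m_assoc[symmetric] rr r_c)

lemma r_inv: "\<lbrakk>1 \<le> i; i \<le> n - 1\<rbrakk> \<Longrightarrow> inv (r i) = r i"
  using inv_equality[OF rr] r_c by blast

definition conj :: "'a \<Rightarrow> 'a \<Rightarrow> 'a" where "conj a x = a \<otimes> x \<otimes> inv a"

lemma conj_closed[simp]: "a \<in> carrier G \<Longrightarrow> x \<in> carrier G \<Longrightarrow> conj a x \<in> carrier G"
  by (simp add: conj_def)

lemma conj_mult: "a \<in> carrier G \<Longrightarrow> b \<in> carrier G \<Longrightarrow> x \<in> carrier G \<Longrightarrow>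
   conj (a \<otimes> b) x = conj a (conj b x)"
  by (simp add: conj_def m_assoc inv_mult_group)

lemma inv_cancel_l: "a \<in> carrier G \<Longrightarrow> z \<in> carrier G \<Longrightarrow> inv a \<otimes> (a \<otimes> z) = z"
  by (simp add: m_assoc[symmetric])

lemma conj_m: "a \<in> carrier G \<Longrightarrow> y \<in> carrier G \<Longrightarrow> x \<in> carrier G \<Longrightarrow>
   conj a (x \<otimes> y) = conj a x \<otimes> conj a y"
  by (simp add: conj_def m_assoc inv_cancel_l)

lemma conj_comm: "a \<in> carrier G \<Longrightarrow> x \<in> carrier G \<Longrightarrow> a \<otimes> x = x \<otimes> a \<Longrightarrow> conj a x = x"
  by (simp add: conj_def m_assoc)

lemma conj_one[simp]: "x \<in> carrier G \<Longrightarrow> conj \<one> x = x"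
  by (simp add: conj_def)

lemma conj_r: "\<lbrakk>1 \<le> i; i \<le> n - 1\<rbrakk> \<Longrightarrow> conj (r i) x = r i \<otimes> x \<otimes> r i"
  by (simp add: conj_def r_inv)

definition R :: "nat list \<Rightarrow> 'a" where "R l = foldr (\<lambda>i x. r i \<otimes> x) l \<one>"

abbreviation okl :: "nat list \<Rightarrow> bool" where "okl l \<equiv> set l \<subseteq> {1..n-1}"

lemma R_Nil[simp]: "R [] = \<one>" by (simp add: R_def)
lemma R_Cons: "R (i # l) = r i \<otimes> R l" by (simp add: R_def)

lemma R_c[simp]: "okl l \<Longrightarrow> R l \<in> carrier G"
  by (induction l) (auto simp: R_Cons r_c)

lemma R_append: "okl l1 \<Longrightarrow> okl l2 \<Longrightarrow> R (l1 @ l2) = R l1 \<otimes> R l2"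
  by (induction l1) (auto simp: R_Cons r_c m_assoc)

lemma R_single: "1 \<le> i \<Longrightarrow> i \<le> n - 1 \<Longrightarrow> R [i] = r i"
  by (simp add: R_Cons r_c)

lemma R_comm: "okl l \<Longrightarrow> 1 \<le> j \<Longrightarrow> j \<le> n - 1 \<Longrightarrow> (\<forall>x\<in>set l. j + 2 \<le> x \<or> x + 2 \<le> j) \<Longrightarrow>
   r j \<otimes> R l = R l \<otimes> r j"
proof (induction l)
  case Nil then show ?case by (simp add: r_c)
next
  case (Cons a l)
  then have c: "r a \<in> carrier G" "r j \<in> carrier G" "R l \<in> carrier G" by (auto intro: r_c)
  have "r j \<otimes> (r a \<otimes> R l) = (r j \<otimes> r a) \<otimes> R l" using c by (simp add: m_assoc)
  also have "\<dots> = r a \<otimes> (r j \<otimes> R l)" using Cons c rcomm[of j a] by (simp add: m_assoc)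
  also have "\<dots> = r a \<otimes> R l \<otimes> r j" using Cons c by (simp add: m_assoc)
  finally show ?case by (simp add: R_Cons)
qed

lemma R_inv: "okl l \<Longrightarrow> inv (R l) = R (rev l)"
proof (induction l)
  case Nil then show ?case by simp
next
  case (Cons a l)
  then show ?case by (simp add: R_Cons inv_mult_group r_c r_inv R_append R_single)
qed

definition Pm :: "nat \<Rightarrow> nat \<Rightarrow> 'a" where "Pm m M = R (rev [m+1..<M])"

lemma Pm_ok: "1 \<le> m \<Longrightarrow> M \<le> n \<Longrightarrow> okl (rev [m+1..<M])" by auto

lemma Pm_c[simp]: "1 \<le> m \<Longrightarrow> M \<le> n \<Longrightarrow> Pm m M \<in> carrier G"
  unfolding Pm_def by (rule R_c) auto

lemma Pm_empty: "Pm m (m+1) = \<one>" by (simp add: Pm_def)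

lemma Pm_top: "1 \<le> m \<Longrightarrow> m < M \<Longrightarrow> M + 1 \<le> n \<Longrightarrow> Pm m (M+1) = r M \<otimes> Pm m M"
  unfolding Pm_def using upt_Suc[of "m+1" M] by (simp add: R_Cons)

lemma Pm_bot: "1 \<le> m \<Longrightarrow> m + 1 < M \<Longrightarrow> M \<le> n \<Longrightarrow> Pm m M = Pm (m+1) M \<otimes> r (m+1)"
proof -
  assume a: "1 \<le> m" "m + 1 < M" "M \<le> n"
  have "[m+1..<M] = (m+1) # [m+2..<M]" using a by (simp add: upt_conv_Cons)
  then have "rev [m+1..<M] = rev [m+2..<M] @ [m+1]" by simp
  moreover have "R (rev [m+2..<M] @ [m+1]) = R (rev [m+2..<M]) \<otimes> R [m+1]"
    by (rule R_append) (use a in auto)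
  ultimately show ?thesis unfolding Pm_def using a by (simp add: R_single)
qed

lemma Pm_comm: "1 \<le> m \<Longrightarrow> M \<le> n \<Longrightarrow> 1 \<le> j \<Longrightarrow> j \<le> n - 1 \<Longrightarrow> j + 1 \<le> m \<or> M + 1 \<le> j \<Longrightarrow>
   r j \<otimes> Pm m M = Pm m M \<otimes> r j"
  unfolding Pm_def by (rule R_comm) auto

lemma Pm_mid: assumes "1 \<le> m" "m < j" "j + 1 < M" "M \<le> n"
  shows "r j \<otimes> Pm m M = Pm m M \<otimes> r (j+1)"
proof -
  have "[m+1..<M] = [m+1..<j] @ [j..<M]" using assms upt_add_eq_append[of "m+1" j "M - j"] by simp
  moreover have "[j..<M] = j # (j+1) # [j+2..<M]" using assms by (simp add: upt_conv_Cons)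
  ultimately have e: "rev [m+1..<M] = rev [j+2..<M] @ [j+1, j] @ rev [m+1..<j]" by simp
  have c: "R (rev [j+2..<M]) \<in> carrier G" "R (rev [m+1..<j]) \<in> carrier G"
     "r j \<in> carrier G" "r (j+1) \<in> carrier G" using assms by (auto intro!: r_c R_c)
  have P: "Pm m M = R (rev [j+2..<M]) \<otimes> (r (j+1) \<otimes> (r j \<otimes> R (rev [m+1..<j])))"
    unfolding Pm_def e using assms c by (subst R_append, force, force)+ (simp add: R_Cons r_c m_assoc)
  have c1: "r j \<otimes> R (rev [j+2..<M]) = R (rev [j+2..<M]) \<otimes> r j"
    by (rule R_comm) (use assms in auto)
  have c2: "r (j+1) \<otimes> R (rev [m+1..<j]) = R (rev [m+1..<j]) \<otimes> r (j+1)"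
    by (rule R_comm) (use assms in auto)
  have b: "r j \<otimes> r (j+1) \<otimes> r j = r (j+1) \<otimes> r j \<otimes> r (j+1)" using assms by (intro rbraid) auto
  have "r j \<otimes> Pm m M = (r j \<otimes> R (rev [j+2..<M])) \<otimes> (r (j+1) \<otimes> (r j \<otimes> R (rev [m+1..<j])))"
    unfolding P using c by (simp add: m_assoc)
  also have "\<dots> = R (rev [j+2..<M]) \<otimes> (r j \<otimes> (r (j+1) \<otimes> (r j \<otimes> R (rev [m+1..<j]))))"
    unfolding c1 using c by (simp add: m_assoc)
  also have "\<dots> = R (rev [j+2..<M]) \<otimes> ((r j \<otimes> r (j+1) \<otimes> r j) \<otimes> R (rev [m+1..<j]))"
    using c by (simp add: m_assoc)
  also have "\<dots> = R (rev [j+2..<M]) \<otimes> (r (j+1) \<otimes> r j \<otimes> (r (j+1) \<otimes> R (rev [m+1..<j])))"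
    unfolding b using c by (simp add: m_assoc)
  also have "\<dots> = Pm m M \<otimes> r (j+1)"
    unfolding P c2 using c by (simp add: m_assoc)
  finally show ?thesis .
qed

end


definition sw :: "nat \<Rightarrow> nat \<Rightarrow> nat" where "sw i = Transposition.transpose i (Suc i)"

lemma sw_apply: "sw j x = (if x = j then j+1 else if x = j+1 then j else x)"
  by (simp add: sw_def Transposition.transpose_def)

context tvrel begin

definition z :: "bool \<Rightarrow> nat \<Rightarrow> 'a" where "z b m = (if b then s m else r m \<otimes> s m \<otimes> r m)"

lemma z_c[simp]: "1 \<le> m \<Longrightarrow> m \<le> n - 1 \<Longrightarrow> z b m \<in> carrier G"
  by (simp add: z_def s_c r_c)

lemma conj_conj: "a \<in> carrier G \<Longrightarrow> b \<in> carrier G \<Longrightarrow> x \<in> carrier G \<Longrightarrow>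
   conj a (conj b x) = conj (a \<otimes> b) x"
  by (simp add: conj_mult)

lemma conj_rr: "1 \<le> j \<Longrightarrow> j \<le> n - 1 \<Longrightarrow> x \<in> carrier G \<Longrightarrow> y \<in> carrier G \<Longrightarrow>
   conj (r j) (x \<otimes> y \<otimes> r j) = conj (r j) x \<otimes> conj (r j) y \<otimes> conj (r j) (r j)"
  by (simp add: conj_m r_c)

lemma conj_z_False: assumes "a \<in> carrier G" "1 \<le> m" "m \<le> n - 1"
  shows "conj a (z False m) = conj a (r m) \<otimes> conj a (s m) \<otimes> conj a (r m)"
  using assms by (simp add: z_def conj_m r_c s_c)

lemma Z1: assumes "1 \<le> m" "m \<le> n - 1" "1 \<le> j" "j \<le> n - 1" "j + 2 \<le> m \<or> m + 2 \<le> j"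
  shows "conj (r j) (z b m) = z b m"
proof -
  have cs: "conj (r j) (s m) = s m"
    using assms srcomm[of m j] by (intro conj_comm) (auto simp: r_c s_c)
  have cr: "conj (r j) (r m) = r m"
    using assms rcomm[of j m] by (intro conj_comm) (auto simp: r_c s_c)
  show ?thesis
  proof (cases b)
    case True then show ?thesis using cs by (simp add: z_def)
  next
    case False then show ?thesis using assms cs cr by (simp add: conj_z_False r_c) (simp add: z_def)
  qed
qed

lemma Z2: assumes "1 \<le> i" "i + 2 \<le> n"
  shows "conj (r i) (z b (Suc i)) = conj (r (Suc i)) (z b i)"
proof -
  have c: "r i \<in> carrier G" "r (Suc i) \<in> carrier G" "s i \<in> carrier G" "s (Suc i) \<in> carrier G"
    using assms by (auto intro: r_c s_c)
  have m: "r i \<otimes> r (Suc i) \<otimes> s i = s (Suc i) \<otimes> r i \<otimes> r (Suc i)" using assms mixed[of m] mixed[of i] by simp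
  have rr1: "r i \<otimes> (r i \<otimes> x) = x" "r (Suc i) \<otimes> (r (Suc i) \<otimes> x) = x" if "x \<in> carrier G" for x
    using assms that by (auto intro!: rr')
  have rr2: "r i \<otimes> r i = \<one>" "r (Suc i) \<otimes> r (Suc i) = \<one>" using assms by (auto intro!: rr)
  have e: "s (Suc i) = r i \<otimes> (r (Suc i) \<otimes> (s i \<otimes> (r (Suc i) \<otimes> r i)))"
  proof -
    have "s (Suc i) = s (Suc i) \<otimes> r i \<otimes> r (Suc i) \<otimes> (r (Suc i) \<otimes> r i)"
      using c by (simp add: m_assoc rr1 rr2)
    also have "\<dots> = r i \<otimes> r (Suc i) \<otimes> s i \<otimes> (r (Suc i) \<otimes> r i)" using m by simp
    finally show ?thesis using c by (simp add: m_assoc)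
  qed
  have cs: "conj (r i) (s (Suc i)) = conj (r (Suc i)) (s i)"
  proof -
    have "conj (r i) (s (Suc i)) = r i \<otimes> (r i \<otimes> (r (Suc i) \<otimes> (s i \<otimes> (r (Suc i) \<otimes> (r i \<otimes> r i)))))"
      using assms c by (simp add: conj_r e m_assoc)
    also have "\<dots> = r (Suc i) \<otimes> (s i \<otimes> r (Suc i))" using c by (simp add: rr1 rr2)
    finally show ?thesis using assms c by (simp add: conj_r m_assoc)
  qed
  have b: "r i \<otimes> r (Suc i) \<otimes> r i = r (Suc i) \<otimes> r i \<otimes> r (Suc i)" using assms rbraid[of m] rbraid[of i] by simp
  have cr: "conj (r i) (r (Suc i)) = conj (r (Suc i)) (r i)"
    using assms b by (simp add: conj_r)
  have cr': "conj (r (Suc i)) (r (Suc i)) = r (Suc i)" "conj (r i) (r i) = r i"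
    using assms c by (auto simp: conj_def r_inv m_assoc rr)
  show ?thesis
  proof (cases b)
    case True then show ?thesis using cs by (simp add: z_def)
  next
    case False
    have "conj (r i) (z b (Suc i)) = conj (r i) (r (Suc i)) \<otimes> conj (r i) (s (Suc i)) \<otimes> conj (r i) (r (Suc i))"
      using False assms c by (simp add: conj_z_False)
    also have "\<dots> = conj (r (Suc i)) (r i) \<otimes> conj (r (Suc i)) (s i) \<otimes> conj (r (Suc i)) (r i)"
      using cs cr by simp
    also have "\<dots> = conj (r (Suc i)) (z b i)"
      using False assms c by (simp add: conj_z_False)
    finally show ?thesis .
  qed
qed

lemma Z3: assumes "1 \<le> m" "m + 2 \<le> n"
  shows "conj (r m \<otimes> r (Suc m)) (z b m) = z b (Suc m)"
proof -
  have c: "r m \<in> carrier G" "r (Suc m) \<in> carrier G" "s m \<in> carrier G" "s (Suc m) \<in> carrier G"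
    using assms by (auto intro: r_c s_c)
  have rr1: "r m \<otimes> (r m \<otimes> x) = x" "r (Suc m) \<otimes> (r (Suc m) \<otimes> x) = x" if "x \<in> carrier G" for x
    using assms that by (auto intro!: rr')
  have rr2: "r m \<otimes> r m = \<one>" "r (Suc m) \<otimes> r (Suc m) = \<one>" using assms by (auto intro!: rr)
  have iv: "inv (r m \<otimes> r (Suc m)) = r (Suc m) \<otimes> r m"
    using assms c by (simp add: inv_mult_group r_inv)
  have mx: "r m \<otimes> r (Suc m) \<otimes> s m = s (Suc m) \<otimes> r m \<otimes> r (Suc m)" using assms mixed[of m] mixed[of i] by simp
  have b: "r m \<otimes> r (Suc m) \<otimes> r m = r (Suc m) \<otimes> r m \<otimes> r (Suc m)" using assms rbraid[of m] rbraid[of i] by simp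
  have cs: "conj (r m \<otimes> r (Suc m)) (s m) = s (Suc m)"
  proof -
    have "conj (r m \<otimes> r (Suc m)) (s m) = (r m \<otimes> r (Suc m) \<otimes> s m) \<otimes> (r (Suc m) \<otimes> r m)"
      unfolding conj_def iv ..
    also have "\<dots> = s (Suc m) \<otimes> (r m \<otimes> (r (Suc m) \<otimes> (r (Suc m) \<otimes> r m)))" unfolding mx using c by (simp add: m_assoc)
    finally show ?thesis using c by (simp add: rr1 rr2)
  qed
  have cr: "conj (r m \<otimes> r (Suc m)) (r m) = r (Suc m)"
  proof -
    have "conj (r m \<otimes> r (Suc m)) (r m) = (r m \<otimes> r (Suc m) \<otimes> r m) \<otimes> (r (Suc m) \<otimes> r m)"
      unfolding conj_def iv ..
    also have "\<dots> = r (Suc m) \<otimes> (r m \<otimes> (r (Suc m) \<otimes> (r (Suc m) \<otimes> r m)))" unfolding b using c by (simp add: m_assoc)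
    finally show ?thesis using c by (simp add: rr1 rr2)
  qed
  show ?thesis
  proof (cases b)
    case True then show ?thesis using cs by (simp add: z_def)
  next
    case False then show ?thesis using cs cr assms c by (simp add: conj_z_False) (simp add: z_def)
  qed
qed

lemma Z4: assumes "1 \<le> m" "m \<le> n - 1"
  shows "conj (r m) (z b m) = z (\<not> b) m"
  using assms by (cases b) (auto simp: z_def conj_r m_assoc rr' rr r_c s_c)

definition Y :: "bool \<Rightarrow> nat \<Rightarrow> nat \<Rightarrow> 'a" where "Y b m M = conj (Pm m M) (z b m)"

lemma HY: assumes "1 \<le> m" "m < M" "M \<le> n" "1 \<le> j" "j \<le> n - 1"
  shows "conj (r j) (Y b m M) =
    (if sw j m < sw j M then Y b (sw j m) (sw j M) else Y (\<not> b) (sw j M) (sw j m))"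
proof -
  have cz: "z b m \<in> carrier G" using assms by simp
  have cP: "Pm m M \<in> carrier G" using assms by simp
  have crj: "r j \<in> carrier G" using assms by (simp add: r_c)
  have e0: "conj (r j) (Y b m M) = conj (r j \<otimes> Pm m M) (z b m)"
    unfolding Y_def using cz cP crj by (simp add: conj_conj)
  consider (c1) "j + 2 \<le> m \<or> M + 1 \<le> j" | (c2) "j + 1 = m" | (c3) "j = m" "m + 1 < M"
    | (c4) "j = m" "M = m + 1" | (c5) "m < j" "j + 1 < M" | (c6) "j + 1 = M" "m < j" | (c7) "j = M"
    using assms by linarith
  then show ?thesis
  proof cases
    case c1
    have "r j \<otimes> Pm m M = Pm m M \<otimes> r j" using assms c1 by (intro Pm_comm) auto
    then have "conj (r j) (Y b m M) = conj (Pm m M) (conj (r j) (z b m))"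
      using e0 cz cP crj by (simp add: conj_conj)
    also have "conj (r j) (z b m) = z b m" by (rule Z1) (use assms c1 in auto)
    finally have "conj (r j) (Y b m M) = Y b m M" by (simp add: Y_def)
    then show ?thesis using c1 assms by (auto simp: sw_apply)
  next
    case c2
    have "r j \<otimes> Pm m M = Pm m M \<otimes> r j" using assms c2 by (intro Pm_comm) auto
    then have "conj (r j) (Y b m M) = conj (Pm m M) (conj (r j) (z b (Suc j)))"
      using e0 cz cP crj c2 by (simp add: conj_conj)
    also have "\<dots> = conj (Pm m M) (conj (r (Suc j)) (z b j))" using Z2[of j b] assms c2 by simp
    also have "\<dots> = conj (Pm m M \<otimes> r m) (z b j)" using assms c2 by (simp add: conj_conj r_c)
    also have "Pm m M \<otimes> r m = Pm j M" using Pm_bot[of j M] assms c2 by simp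
    finally show ?thesis using c2 assms by (auto simp: sw_apply Y_def)
  next
    case c3
    have pb: "Pm m M = Pm (Suc m) M \<otimes> r (Suc m)" using Pm_bot[of m M] assms c3 by simp
    have cm: "r m \<otimes> Pm (Suc m) M = Pm (Suc m) M \<otimes> r m" using assms c3 by (intro Pm_comm) auto
    have c': "Pm (Suc m) M \<in> carrier G" "r m \<in> carrier G" "r (Suc m) \<in> carrier G"
      using assms c3 by (auto simp: r_c)
    have "r j \<otimes> Pm m M = Pm (Suc m) M \<otimes> (r m \<otimes> r (Suc m))"
      unfolding pb c3(1) using c' by (simp add: m_assoc[symmetric] cm)
    then have "conj (r j) (Y b m M) = conj (Pm (Suc m) M) (conj (r m \<otimes> r (Suc m)) (z b m))"
      using e0 cz c' by (simp add: conj_conj)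
    also have "\<dots> = Y b (Suc m) M" using Z3[of m b] assms c3 by (simp add: Y_def)
    finally show ?thesis using c3 assms by (auto simp: sw_apply)
  next
    case c4
    have "conj (r j) (Y b m M) = conj (r m) (z b m)" using e0 c4 crj by (simp add: Pm_empty[simplified])
    also have "\<dots> = z (\<not> b) m" using Z4 assms c4 by simp
    finally show ?thesis using c4 assms by (auto simp: sw_apply Y_def Pm_empty[simplified])
  next
    case c5
    have "r j \<otimes> Pm m M = Pm m M \<otimes> r (Suc j)" using Pm_mid[of m j M] assms c5 by simp
    then have "conj (r j) (Y b m M) = conj (Pm m M) (conj (r (Suc j)) (z b m))"
      using e0 cz cP assms c5 by (simp add: conj_conj r_c)
    also have "conj (r (Suc j)) (z b m) = z b m" by (rule Z1) (use assms c5 in auto)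
    finally have "conj (r j) (Y b m M) = Y b m M" by (simp add: Y_def)
    then show ?thesis using c5 assms by (auto simp: sw_apply)
  next
    case c6
    have pt: "Pm m M = r j \<otimes> Pm m j" using Pm_top[of m j] assms c6 by simp
    have "r j \<otimes> Pm m M = Pm m j" unfolding pt using assms c6 by (simp add: rr')
    then have "conj (r j) (Y b m M) = Y b m j" using e0 by (simp add: Y_def)
    then show ?thesis using c6 assms by (auto simp: sw_apply)
  next
    case c7
    have "r j \<otimes> Pm m M = Pm m (M+1)" using Pm_top[of m M] assms c7 by simp
    then have "conj (r j) (Y b m M) = Y b m (M+1)" using e0 by (simp add: Y_def)
    then show ?thesis using c7 assms by (auto simp: sw_apply)
  qed
qed

end


definition pm :: "nat list \<Rightarrow> nat \<Rightarrow> nat" where "pm L = foldr (\<lambda>i p. sw i \<circ> p) L id"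

lemma pm_Nil[simp]: "pm [] = id" by (simp add: pm_def)
lemma pm_Cons: "pm (i # L) = sw i \<circ> pm L" by (simp add: pm_def)
lemma pm_append: "pm (a @ b) = pm a \<circ> pm b" by (induction a) (auto simp: pm_Cons)

lemma pm_fix: "(\<forall>i\<in>set u. x \<noteq> i \<and> x \<noteq> Suc i) \<Longrightarrow> pm u x = x"
  by (induction u) (auto simp: pm_Cons sw_apply)

lemma pm_range: "set L \<subseteq> {1..n-1} \<Longrightarrow> 1 \<le> x \<Longrightarrow> x \<le> n \<Longrightarrow> 1 \<le> pm L x \<and> pm L x \<le> n"
  by (induction L) (auto simp: pm_Cons sw_apply)

lemma pm_chain: "pm (rev [j..<j+d+1]) j = j+d+1"
proof (induction d)
  case 0 then show ?case by (simp add: pm_Cons sw_apply)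
next
  case (Suc d)
  have "rev [j..<j + Suc d + 1] = (j+d+1) # rev [j..<j+d+1]" by simp
  then show ?case using Suc by (simp add: pm_Cons sw_apply)
qed

lemma sw_range: "1 \<le> j \<Longrightarrow> j \<le> n - 1 \<Longrightarrow> 1 \<le> x \<Longrightarrow> x \<le> n \<Longrightarrow> 1 \<le> sw j x \<and> sw j x \<le> n"
  by (auto simp: sw_apply)

lemma sw_inj: "sw j x = sw j y \<longleftrightarrow> x = y"
  by (auto simp: sw_apply split: if_splits)

context tvrel begin

definition X :: "nat \<Rightarrow> nat \<Rightarrow> 'a" where "X k l = (if k < l then Y True k l else Y False l k)"

lemma HX: assumes "1 \<le> k" "k \<le> n" "1 \<le> l" "l \<le> n" "k \<noteq> l" "1 \<le> j" "j \<le> n - 1"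
  shows "conj (r j) (X k l) = X (sw j k) (sw j l)"
proof (cases "k < l")
  case True
  have "conj (r j) (X k l) = conj (r j) (Y True k l)" using True by (simp add: X_def)
  also have "\<dots> = (if sw j k < sw j l then Y True (sw j k) (sw j l) else Y (\<not> True) (sw j l) (sw j k))"
    by (rule HY) (use assms True in auto)
  also have "\<dots> = X (sw j k) (sw j l)" by (simp add: X_def)
  finally show ?thesis .
next
  case False
  then have lk: "l < k" using assms by auto
  have ne: "sw j k \<noteq> sw j l" using assms sw_inj[of j k l] by simp
  have "conj (r j) (X k l) = conj (r j) (Y False l k)" using False by (simp add: X_def)
  also have "\<dots> = (if sw j l < sw j k then Y False (sw j l) (sw j k) else Y (\<not> False) (sw j k) (sw j l))"
    by (rule HY) (use assms lk in auto)
  also have "\<dots> = X (sw j k) (sw j l)" using ne by (auto simp: X_def)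
  finally show ?thesis .
qed

lemma H: assumes "okl L" "1 \<le> i" "i \<le> n - 1"
  shows "\<exists>k l. 1 \<le> k \<and> k \<le> n \<and> 1 \<le> l \<and> l \<le> n \<and> k \<noteq> l \<and> conj (R L) (s i) = X k l"
  using assms(1)
proof (induction L)
  case Nil
  have e: "conj (R []) (s i) = X i (Suc i)"
    using assms by (simp add: X_def Y_def Pm_empty[simplified] z_def s_c)
  have "1 \<le> i \<and> i \<le> n \<and> 1 \<le> Suc i \<and> Suc i \<le> n \<and> i \<noteq> Suc i" using assms by linarith
  then show ?case using e by blast
next
  case (Cons j L)
  then obtain k l where kl: "1 \<le> k" "k \<le> n" "1 \<le> l" "l \<le> n" "k \<noteq> l" "conj (R L) (s i) = X k l"
    by auto
  have j: "1 \<le> j" "j \<le> n - 1" using Cons.prems by auto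
  have okL: "okl L" using Cons.prems by auto
  have "conj (R (j # L)) (s i) = conj (r j) (conj (R L) (s i))"
    using okL j assms by (simp add: R_Cons conj_conj r_c s_c)
  also have "\<dots> = X (sw j k) (sw j l)" unfolding kl(6) by (rule HX) (use kl j in auto)
  finally have e: "conj (R (j # L)) (s i) = X (sw j k) (sw j l)" .
  have "1 \<le> sw j k \<and> sw j k \<le> n" by (rule sw_range) (use j kl in auto)
  moreover have "1 \<le> sw j l \<and> sw j l \<le> n" by (rule sw_range) (use j kl in auto)
  moreover have "sw j k \<noteq> sw j l" using kl(5) sw_inj[of j k l] by simp
  ultimately show ?case using e by blast
qed

lemma rgam: assumes "1 \<le> i" "i \<le> n - 1" "1 \<le> j" "j \<le> n"
  shows "r i \<otimes> g j = g (sw i j) \<otimes> r i"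
proof -
  consider "j = i" | "j = Suc i" | "j \<noteq> i" "j \<noteq> Suc i" by blast
  then show ?thesis
  proof cases
    case 1 then show ?thesis using rg assms by (simp add: sw_apply)
  next
    case 2
    have c: "r i \<in> carrier G" "g i \<in> carrier G" "g (Suc i) \<in> carrier G" using assms 2 by (auto intro: r_c g_c)
    have e: "r i \<otimes> g i = g (Suc i) \<otimes> r i" using rg assms by simp
    have "g (Suc i) = r i \<otimes> g i \<otimes> r i"
      using e c assms by (simp add: m_assoc rr' rr)
    then have "r i \<otimes> g (Suc i) = g i \<otimes> r i" using c assms by (simp add: m_assoc rr')
    then show ?thesis using 2 by (simp add: sw_apply)
  next
    case 3 then show ?thesis using grcomm[of i j] assms by (simp add: sw_apply)
  qed
qed

lemma F: assumes "okl L" "1 \<le> j" "j \<le> n"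
  shows "R L \<otimes> g j = g (pm L j) \<otimes> R L"
  using assms
proof (induction L arbitrary: j)
  case Nil then show ?case by (simp add: g_c)
next
  case (Cons i L)
  have i: "1 \<le> i" "i \<le> n - 1" using Cons by auto
  have pr: "1 \<le> pm L j" "pm L j \<le> n" using pm_range[of L n j] Cons by auto
  have "R (i # L) \<otimes> g j = r i \<otimes> (g (pm L j) \<otimes> R L)"
    using Cons.prems Cons.IH i by (simp add: R_Cons m_assoc r_c g_c)
  also have "\<dots> = g (sw i (pm L j)) \<otimes> r i \<otimes> R L"
    using rgam[OF i pr] Cons i pr by (simp add: m_assoc[symmetric] r_c g_c)
  moreover have "g (sw i (pm L j)) \<in> carrier G" using sw_range[OF i pr] by (simp add: g_c)
  moreover have "R L \<in> carrier G" using Cons.prems by simp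
  ultimately show ?case using i by (simp add: R_Cons pm_Cons m_assoc r_c)
qed

lemma A_step: assumes "m \<le> n - 1" "set L \<subseteq> {1..m}"
  shows "\<exists>u j. set u \<subseteq> {1..m-1} \<and> 1 \<le> j \<and> j \<le> m+1 \<and> R L = R u \<otimes> R (rev [j..<m+1])"
  using assms(2)
proof (induction L rule: rev_induct)
  case Nil
  then show ?case by (intro exI[of _ "[]"] exI[of _ "m+1"]) auto
next
  case (snoc i L)
  then obtain u j where uj: "set u \<subseteq> {1..m-1}" "1 \<le> j" "j \<le> m+1" "R L = R u \<otimes> R (rev [j..<m+1])"
    by auto
  have i: "1 \<le> i" "i \<le> m" using snoc.prems by auto
  have okL1: "okl u" by (rule subset_trans[OF uj(1)]) (use assms in auto)
  have okL: "okl L" "okl u" "okl (rev [j..<m+1])" using snoc.prems uj(2,3) assms okL1 by auto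
  have cu: "R u \<in> carrier G" "R (rev [j..<m+1]) \<in> carrier G" "r i \<in> carrier G"
    using okL i assms by (auto intro: r_c)
  have RL: "R (L @ [i]) = R u \<otimes> (R (rev [j..<m+1]) \<otimes> r i)"
    using okL i assms uj cu by (simp add: R_append R_single m_assoc)
  consider "i + 2 \<le> j" | "i + 1 = j" | "i = j" | "j < i" by linarith
  then show ?case
  proof cases
    case 1
    have "r i \<otimes> R (rev [j..<m+1]) = R (rev [j..<m+1]) \<otimes> r i"
      by (rule R_comm) (use okL i assms 1 in auto)
    then have "R (L @ [i]) = R (u @ [i]) \<otimes> R (rev [j..<m+1])"
      using RL okL i assms cu by (simp add: R_append R_single m_assoc)
    then show ?thesis using uj i 1 by (intro exI[of _ "u @ [i]"] exI[of _ j]) auto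
  next
    case 2
    have "[i..<m+1] = i # [j..<m+1]" using 2 i by (simp add: upt_conv_Cons)
    then have "R (rev [i..<m+1]) = R (rev [j..<m+1]) \<otimes> r i"
      using okL i assms by (simp add: R_append R_single)
    then show ?thesis using RL uj i 2 by (intro exI[of _ u] exI[of _ i]) auto
  next
    case 3
    have "[j..<m+1] = j # [j+1..<m+1]" using 3 i by (simp add: upt_conv_Cons)
    then have "R (rev [j..<m+1]) = R (rev [j+1..<m+1]) \<otimes> r j"
      using okL i assms 3 by (simp add: R_append R_single)
    then have ceq: "R (rev [j..<m+1]) = R (rev [j+1..<m+1]) \<otimes> r j" .
    have cc: "R (rev [j+1..<m+1]) \<in> carrier G" by (rule R_c) (use assms in auto)
    have rj: "r j \<in> carrier G" using 3 i assms by (simp add: r_c)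
    have rrj: "r j \<otimes> r j = \<one>" using 3 i assms by (simp add: rr)
    have "R (rev [j..<m+1]) \<otimes> r i = R (rev [j+1..<m+1]) \<otimes> r j \<otimes> r j"
      by (simp only: ceq 3)
    also have "\<dots> = R (rev [j+1..<m+1])" by (simp only: m_assoc[OF cc rj rj] rrj r_one[OF cc])
    finally have "R (rev [j..<m+1]) \<otimes> r i = R (rev [j+1..<m+1])" .
    then show ?thesis using RL uj i 3 by (intro exI[of _ u] exI[of _ "j+1"]) auto
  next
    case 4
    then obtain h where h: "i = Suc h" "j \<le> h" by (cases i) auto
    have "[j..<m+1] = [j..<h] @ [h..<m+1]" using h i upt_add_eq_append[of j h "m+1-h"] by simp
    moreover have "[h..<m+1] = h # i # [i+1..<m+1]" using h i by (simp add: upt_conv_Cons)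
    ultimately have e: "rev [j..<m+1] = rev [i+1..<m+1] @ [i, h] @ rev [j..<h]" by simp
    define A where "A = R (rev [i+1..<m+1])"
    define B where "B = R (rev [j..<h])"
    have c: "A \<in> carrier G" "B \<in> carrier G" "r i \<in> carrier G" "r h \<in> carrier G"
      using h i uj assms by (auto simp: A_def B_def intro!: r_c R_c)
    have cj: "R (rev [j..<m+1]) = A \<otimes> (r i \<otimes> (r h \<otimes> B))"
      unfolding e A_def B_def using h i uj assms c
      by (subst R_append, force, force)+ (simp add: R_Cons r_c m_assoc A_def B_def)
    have cB: "r i \<otimes> B = B \<otimes> r i" unfolding B_def by (rule R_comm) (use h i uj assms in auto)
    have cA: "r h \<otimes> A = A \<otimes> r h" unfolding A_def by (rule R_comm) (use h i uj assms in auto)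
    have b: "r h \<otimes> r i \<otimes> r h = r i \<otimes> r h \<otimes> r i" using rbraid[of h] h i uj assms by simp
    have "R (rev [j..<m+1]) \<otimes> r i = A \<otimes> (r i \<otimes> (r h \<otimes> (B \<otimes> r i)))"
      unfolding cj using c by (simp add: m_assoc)
    also have "\<dots> = A \<otimes> ((r i \<otimes> r h \<otimes> r i) \<otimes> B)"
      unfolding cB[symmetric] using c by (simp add: m_assoc)
    also have "\<dots> = (r h \<otimes> A) \<otimes> (r i \<otimes> (r h \<otimes> B))"
      unfolding b[symmetric] cA using c by (simp add: m_assoc)
    also have "\<dots> = r h \<otimes> R (rev [j..<m+1])"
      unfolding cj using c by (simp add: m_assoc)
    finally have ce: "R (rev [j..<m+1]) \<otimes> r i = r h \<otimes> R (rev [j..<m+1])" .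
    have uh: "R (u @ [h]) = R u \<otimes> r h"
      using okL h i uj by (subst R_append) (auto simp: R_single)
    have "R (L @ [i]) = R u \<otimes> (r h \<otimes> R (rev [j..<m+1]))" unfolding RL ce ..
    also have "\<dots> = R (u @ [h]) \<otimes> R (rev [j..<m+1])" unfolding uh using cu c by (simp only: m_assoc)
    finally have "R (L @ [i]) = R (u @ [h]) \<otimes> R (rev [j..<m+1])" .
    then show ?thesis using uj i h by (intro exI[of _ "u @ [h]"] exI[of _ j]) auto
  qed
qed

lemma coxeter:
  assumes ph1: "\<And>L. okl L \<Longrightarrow> ph (R L) = pm L"
    and ph2: "\<And>x y. x \<in> carrier G \<Longrightarrow> y \<in> carrier G \<Longrightarrow> ph (x \<otimes> y) = ph x \<circ> ph y"
  shows "m \<le> n - 1 \<Longrightarrow> set L \<subseteq> {1..m} \<Longrightarrow> pm L = id \<Longrightarrow> R L = \<one>"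
proof (induction m arbitrary: L)
  case 0 then show ?case by auto
next
  case (Suc m)
  obtain u j where uj: "set u \<subseteq> {1..m}" "1 \<le> j" "j \<le> Suc m + 1"
      "R L = R u \<otimes> R (rev [j..<Suc m+1])"
    using A_step[OF Suc.prems(1,2)] by auto
  have ok: "okl (rev [j..<Suc m+1])" "okl u" "okl L" using uj Suc.prems by auto
  have pL: "pm L = pm u \<circ> pm (rev [j..<Suc m+1])"
  proof -
    have "pm L = ph (R L)" using ph1[OF ok(3)] by simp
    also have "\<dots> = ph (R u) \<circ> ph (R (rev [j..<Suc m+1]))" unfolding uj(4)
      by (rule ph2) (use ok in simp_all)
    also have "\<dots> = pm u \<circ> pm (rev [j..<Suc m+1])" using ph1[OF ok(1)] ph1[OF ok(2)] by simp
    finally show ?thesis .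
  qed
  have fx: "pm u (Suc m + 1) = Suc m + 1" using uj by (intro pm_fix) auto
  have "j = Suc m + 1"
  proof (rule ccontr)
    assume "j \<noteq> Suc m + 1"
    then have jl: "j \<le> Suc m" using uj by auto
    have "pm (rev [j..<Suc m+1]) j = Suc m + 1"
      using pm_chain[of j "Suc m - j"] jl by simp
    then have "pm L j = Suc m + 1" using pL fx by simp
    then show False using Suc.prems(3) jl by simp
  qed
  then have RLu: "R L = R u" and "pm L = pm u" using uj(4) ok pL by simp_all
  then have "pm u = id" using Suc.prems(3) by metis
  have "R u = \<one>" using Suc.IH[of u] Suc.prems uj \<open>pm u = id\<close> by simp
  then show ?case using RLu by simp
qed

end


lemma tvb_group: "group (TVB n)"
  unfolding TVB_def by (rule pres_group)

lemma tvb_mult: "u \<in> words_on (tvb_gens n) \<Longrightarrow> v \<in> words_on (tvb_gens n) \<Longrightarrow>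
  tvb_elt n u \<otimes>\<^bsub>TVB n\<^esub> tvb_elt n v = tvb_elt n (u @ v)"
  unfolding TVB_def tvb_elt_def by (rule pres_mult)

lemma tvb_carrier: "carrier (TVB n) = tvb_elt n ` words_on (tvb_gens n)"
  unfolding TVB_def tvb_elt_def[abs_def] by (rule pres_carrier)

lemma tvb_one: "\<one>\<^bsub>TVB n\<^esub> = tvb_elt n []"
  unfolding TVB_def tvb_elt_def by (rule pres_one)

lemma tvb_rel: "(u, v) \<in> tvb_rels n \<Longrightarrow> u \<in> words_on (tvb_gens n) \<Longrightarrow> v \<in> words_on (tvb_gens n) \<Longrightarrow>
  tvb_elt n u = tvb_elt n v"
  unfolding tvb_elt_def by (rule pres_elt_eq[OF pres_eq.base])

lemma gens_simps[simp]:
  "Sig i \<in> tvb_gens n \<longleftrightarrow> 1 \<le> i \<and> i \<le> n - 1"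
  "Rho i \<in> tvb_gens n \<longleftrightarrow> 1 \<le> i \<and> i \<le> n - 1"
  "Gam i \<in> tvb_gens n \<longleftrightarrow> 1 \<le> i \<and> i \<le> n"
  by (auto simp: tvb_gens_def)

lemma tvb_inv: "g \<in> tvb_gens n \<Longrightarrow> tvb_elt n [(g, False)] = inv\<^bsub>TVB n\<^esub> (tvb_elt n [(g, True)])"
  unfolding TVB_def tvb_elt_def by (rule pres_inv)

lemma rel_rr: "1 \<le> i \<Longrightarrow> i \<le> n - 1 \<Longrightarrow> (wr i @ wr i, []) \<in> tvb_rels n"
  unfolding tvb_rels_def by simp

lemma elt_c: "w \<in> words_on (tvb_gens n) \<Longrightarrow> tvb_elt n w \<in> carrier (TVB n)"
  by (simp add: tvb_carrier)

locale tvbs = fixes n :: nat assumes n2: "2 \<le> n"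

sublocale tvbs \<subseteq> tvrel "TVB n" n "sigma n" "rho n" "gamma n"
proof -
  interpret group "TVB n" by (rule tvb_group)
  show "tvrel (TVB n) n (sigma n) (rho n) (gamma n)"
  proof (unfold_locales)
    fix i assume "1 \<le> i" "i \<le> n - 1"
    then show "sigma n i \<in> carrier (TVB n)" "rho n i \<in> carrier (TVB n)"
      by (auto simp: sigma_def rho_def intro!: elt_c)
  next
    fix i assume "1 \<le> i" "i \<le> n"
    then show "gamma n i \<in> carrier (TVB n)" by (auto simp: gamma_def intro!: elt_c)
  next
    fix i assume "1 \<le> i" "i \<le> n - 1"
    then show "rho n i \<otimes>\<^bsub>TVB n\<^esub> rho n i = \<one>\<^bsub>TVB n\<^esub>"
      by (simp add: rho_def tvb_mult tvb_one, intro tvb_rel) (simp_all add: tvb_rels_def)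
  next
    fix i j assume "1 \<le> i" "i \<le> n - 1" "1 \<le> j" "j \<le> n - 1" "i + 2 \<le> j \<or> j + 2 \<le> i"
    then show "rho n i \<otimes>\<^bsub>TVB n\<^esub> rho n j = rho n j \<otimes>\<^bsub>TVB n\<^esub> rho n i"
      by (simp add: rho_def tvb_mult, intro tvb_rel) (auto simp add: tvb_rels_def)
  next
    fix i assume a: "1 \<le> i" "i \<le> n - 2"
    then have "Suc i \<le> n - 1" "i \<le> n - 1" by linarith+
    with a show "rho n i \<otimes>\<^bsub>TVB n\<^esub> rho n (i+1) \<otimes>\<^bsub>TVB n\<^esub> rho n i =
       rho n (i+1) \<otimes>\<^bsub>TVB n\<^esub> rho n i \<otimes>\<^bsub>TVB n\<^esub> rho n (i+1)"
      by (simp add: rho_def tvb_mult, intro tvb_rel) (simp_all add: tvb_rels_def)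
  next
    fix i j assume "1 \<le> i" "i \<le> n - 1" "1 \<le> j" "j \<le> n - 1" "i + 2 \<le> j \<or> j + 2 \<le> i"
    then show "sigma n i \<otimes>\<^bsub>TVB n\<^esub> rho n j = rho n j \<otimes>\<^bsub>TVB n\<^esub> sigma n i"
      by (simp add: rho_def sigma_def tvb_mult, intro tvb_rel) (auto simp add: tvb_rels_def)
  next
    fix i assume a: "1 \<le> i" "i \<le> n - 2"
    then have "Suc i \<le> n - 1" "i \<le> n - 1" by linarith+
    with a show "rho n i \<otimes>\<^bsub>TVB n\<^esub> rho n (i+1) \<otimes>\<^bsub>TVB n\<^esub> sigma n i =
       sigma n (i+1) \<otimes>\<^bsub>TVB n\<^esub> rho n i \<otimes>\<^bsub>TVB n\<^esub> rho n (i+1)"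
      by (simp add: rho_def sigma_def tvb_mult, intro tvb_rel) (simp_all add: tvb_rels_def)
  next
    fix i assume "1 \<le> i" "i \<le> n"
    then show "gamma n i \<otimes>\<^bsub>TVB n\<^esub> gamma n i = \<one>\<^bsub>TVB n\<^esub>"
      by (simp add: gamma_def tvb_mult tvb_one, intro tvb_rel) (simp_all add: tvb_rels_def)
  next
    fix i j assume "1 \<le> i" "i \<le> n - 1" "1 \<le> j" "j \<le> n" "j \<noteq> i" "j \<noteq> i + 1"
    then show "gamma n j \<otimes>\<^bsub>TVB n\<^esub> rho n i = rho n i \<otimes>\<^bsub>TVB n\<^esub> gamma n j"
      by (simp add: rho_def gamma_def tvb_mult, intro tvb_rel) (simp_all add: tvb_rels_def)
  next
    fix i assume "1 \<le> i" "i \<le> n - 1"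
    then show "rho n i \<otimes>\<^bsub>TVB n\<^esub> gamma n i = gamma n (i+1) \<otimes>\<^bsub>TVB n\<^esub> rho n i"
      by (simp add: rho_def gamma_def tvb_mult, intro tvb_rel) (simp_all add: tvb_rels_def)
  qed
qed



context tvrel begin

definition Gp :: "nat list \<Rightarrow> 'a" where "Gp l = foldr (\<lambda>i x. g i \<otimes> x) l \<one>"

abbreviation okg :: "nat list \<Rightarrow> bool" where "okg l \<equiv> set l \<subseteq> {1..n}"

lemma Gp_Nil[simp]: "Gp [] = \<one>" by (simp add: Gp_def)
lemma Gp_Cons: "Gp (i # l) = g i \<otimes> Gp l" by (simp add: Gp_def)
lemma Gp_c[simp]: "okg l \<Longrightarrow> Gp l \<in> carrier G"
  by (induction l) (auto simp: Gp_Cons g_c)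
lemma Gp_snoc: "okg l \<Longrightarrow> 1 \<le> j \<Longrightarrow> j \<le> n \<Longrightarrow> Gp (l @ [j]) = Gp l \<otimes> g j"
  by (induction l) (auto simp: Gp_Cons g_c m_assoc)

lemma R_snoc: "okl l \<Longrightarrow> 1 \<le> j \<Longrightarrow> j \<le> n - 1 \<Longrightarrow> R (l @ [j]) = R l \<otimes> r j"
  by (simp add: R_append R_single)

lemma conj_inv: "a \<in> carrier G \<Longrightarrow> x \<in> carrier G \<Longrightarrow> conj a (inv x) = inv (conj a x)"
  by (simp add: conj_def inv_mult_group m_assoc)

lemma conj_shift: "a \<in> carrier G \<Longrightarrow> x \<in> carrier G \<Longrightarrow> a \<otimes> x = conj a x \<otimes> a"
  by (simp add: conj_def m_assoc)

end

abbreviation fR :: "nat \<Rightarrow> tvb_gen \<times> bool" where "fR i \<equiv> (Rho i, True)"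

lemma cm: "concat (map wr L) = map fR L" by (induction L) auto

lemma words_map: "set L \<subseteq> {1..n-1} \<Longrightarrow> map fR L \<in> words_on (tvb_gens n)"
  by (induction L) auto

context tvbs begin

lemma R_word: "okl L \<Longrightarrow> tvb_elt n (map fR L) = R L"
proof (induction L)
  case Nil then show ?case by (simp add: tvb_one[symmetric])
next
  case (Cons i L)
  have "tvb_elt n (wr i @ map fR L) = tvb_elt n (wr i) \<otimes>\<^bsub>TVB n\<^esub> tvb_elt n (map fR L)"
    using Cons.prems words_map[of L n] by (simp add: tvb_mult)
  then show ?case using Cons by (simp add: R_Cons rho_def[symmetric])
qed

lemma X_xgen: assumes "1 \<le> k" "k \<le> n" "1 \<le> l" "l \<le> n" "k \<noteq> l"
  shows "xgen n k l = X k l"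
proof (cases "k < l")
  case True
  have ok: "okl (rev [k+1..<l])" "okl [k+1..<l]" using assms True by auto
  have w: "map fR (rev [k+1..<l]) \<in> words_on (tvb_gens n)" "map fR [k+1..<l] \<in> words_on (tvb_gens n)"
    using ok by (auto intro!: words_map simp del: set_rev)
  have e1: "xgen n k l = tvb_elt n (map fR (rev [k+1..<l]) @ ws k @ map fR [k+1..<l])"
    unfolding xgen_def x_word_def using True by (simp only: cm if_True)
  have e2: "tvb_elt n (map fR (rev [k+1..<l]) @ ws k @ map fR [k+1..<l]) =
     tvb_elt n (map fR (rev [k+1..<l])) \<otimes>\<^bsub>TVB n\<^esub> (sigma n k \<otimes>\<^bsub>TVB n\<^esub> tvb_elt n (map fR [k+1..<l]))"
    using w assms True by (simp add: tvb_mult sigma_def)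
  have "xgen n k l = R (rev [k+1..<l]) \<otimes>\<^bsub>TVB n\<^esub> (sigma n k \<otimes>\<^bsub>TVB n\<^esub> R [k+1..<l])"
    unfolding e1 e2 using ok by (simp only: R_word)
  also have "\<dots> = conj (Pm k l) (sigma n k)"
    using ok assms True R_inv[OF ok(1)] by (simp add: conj_def Pm_def m_assoc s_c)
  finally show ?thesis using True by (simp add: X_def Y_def z_def)
next
  case False
  then have lk: "l < k" using assms by auto
  have ok: "okl (rev [l+1..<k])" "okl [l+1..<k]" using assms lk by auto
  have w: "map fR (rev [l+1..<k]) \<in> words_on (tvb_gens n)" "map fR [l+1..<k] \<in> words_on (tvb_gens n)"
    using ok by (auto intro!: words_map simp del: set_rev)
  have e1: "xgen n k l = tvb_elt n (map fR (rev [l+1..<k]) @ wr l @ ws l @ wr l @ map fR [l+1..<k])"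
    unfolding xgen_def x_word_def using False by (simp only: cm if_False)
  have e2: "tvb_elt n (map fR (rev [l+1..<k]) @ wr l @ ws l @ wr l @ map fR [l+1..<k]) =
     tvb_elt n (map fR (rev [l+1..<k])) \<otimes>\<^bsub>TVB n\<^esub> (rho n l \<otimes>\<^bsub>TVB n\<^esub> (sigma n l \<otimes>\<^bsub>TVB n\<^esub>
       (rho n l \<otimes>\<^bsub>TVB n\<^esub> tvb_elt n (map fR [l+1..<k]))))"
    using w assms lk by (simp add: tvb_mult sigma_def rho_def)
  have "xgen n k l = R (rev [l+1..<k]) \<otimes>\<^bsub>TVB n\<^esub> (rho n l \<otimes>\<^bsub>TVB n\<^esub> (sigma n l \<otimes>\<^bsub>TVB n\<^esub>
       (rho n l \<otimes>\<^bsub>TVB n\<^esub> R [l+1..<k])))"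
    unfolding e1 e2 using ok by (simp only: R_word)
  also have "\<dots> = conj (Pm l k) (rho n l \<otimes>\<^bsub>TVB n\<^esub> sigma n l \<otimes>\<^bsub>TVB n\<^esub> rho n l)"
    using ok assms lk R_inv[OF ok(1)] by (simp add: conj_def Pm_def m_assoc s_c r_c)
  finally show ?thesis using False lk by (simp add: X_def Y_def z_def)
qed

end



locale tvbm = tvbs +
  fixes phiHT :: "tvb_gen word set \<Rightarrow> tvb_gen word set"
    and phiH :: "tvb_gen word set \<Rightarrow> nat \<Rightarrow> nat"
    and psiH :: "tvb_gen word set \<Rightarrow> tvb_gen word set"
  assumes hT: "is_phi_HT n phiHT" and hH: "is_phi_H n phiH" and hP: "is_psi_H n phiH psiH"
begin

abbreviation KH where "KH \<equiv> {x \<in> carrier (TVB n). phiH x = id}"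

lemma KH_eq: "kernel (TVB n) (sym_group n) phiH = KH"
  by (simp add: kernel_def sym_group_one)

lemma TS_sub: "carrier (TS n) \<subseteq> carrier (TVB n)"
  unfolding TS_def carrier_subgroup_generated by (rule generate_incl) auto

lemma A_sub: "carrier (A n) \<subseteq> carrier (TVB n)"
  unfolding A_def carrier_subgroup_generated by (rule generate_incl) auto

lemma TS_ops: "mult (TS n) = mult (TVB n)" "one (TS n) = one (TVB n)"
  by (simp_all add: TS_def subgroup_generated_def)

lemma A_ops: "mult (A n) = mult (TVB n)" "one (A n) = one (TVB n)"
  by (simp_all add: A_def subgroup_generated_def)

lemma TVH_ops: "mult (TVH n phiH) = mult (TVB n)" "carrier (TVH n phiH) = KH"
  by (simp_all add: TVH_def KH_eq)

lemma T_hom: "phiHT \<in> hom (TVB n) (TS n)" using hT by (simp add: is_phi_HT_def)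
lemma H_hom: "phiH \<in> hom (TVB n) (sym_group n)" using hH by (simp add: is_phi_H_def)
lemma P_hom: "psiH \<in> hom (TVH n phiH) (A n)" using hP by (simp add: is_psi_H_def)

lemma T_c: "x \<in> carrier (TVB n) \<Longrightarrow> phiHT x \<in> carrier (TVB n)"
  using hom_in_carrier[OF T_hom] TS_sub by blast
lemma T_mult: "x \<in> carrier (TVB n) \<Longrightarrow> y \<in> carrier (TVB n) \<Longrightarrow>
   phiHT (x \<otimes>\<^bsub>TVB n\<^esub> y) = phiHT x \<otimes>\<^bsub>TVB n\<^esub> phiHT y"
  using hom_mult[OF T_hom] TS_ops by simp
lemma T_one: "phiHT \<one>\<^bsub>TVB n\<^esub> = \<one>\<^bsub>TVB n\<^esub>"
proof -
  have "phiHT \<one>\<^bsub>TVB n\<^esub> \<otimes>\<^bsub>TVB n\<^esub> phiHT \<one>\<^bsub>TVB n\<^esub> = phiHT \<one>\<^bsub>TVB n\<^esub>"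
    using T_mult[of "\<one>\<^bsub>TVB n\<^esub>" "\<one>\<^bsub>TVB n\<^esub>"] by simp
  then show ?thesis using T_c[of "\<one>\<^bsub>TVB n\<^esub>"] by simp
qed

lemma H_mult: "x \<in> carrier (TVB n) \<Longrightarrow> y \<in> carrier (TVB n) \<Longrightarrow>
   phiH (x \<otimes>\<^bsub>TVB n\<^esub> y) = phiH x \<circ> phiH y"
  using hom_mult[OF H_hom] by (simp add: sym_group_mult)
lemma H_one: "phiH \<one>\<^bsub>TVB n\<^esub> = id"
  using hom_one[OF H_hom tvb_group sym_group_is_group] by (simp add: sym_group_one)

lemma P_c: "x \<in> KH \<Longrightarrow> psiH x \<in> carrier (TVB n)"
  using hom_in_carrier[OF P_hom, of x] A_sub TVH_ops by blast
lemma P_mult: "x \<in> KH \<Longrightarrow> y \<in> KH \<Longrightarrow> psiH (x \<otimes>\<^bsub>TVB n\<^esub> y) = psiH x \<otimes>\<^bsub>TVB n\<^esub> psiH y"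
  using hom_mult[OF P_hom, of x y] A_ops TVH_ops by simp

lemma KH_mult: "x \<in> KH \<Longrightarrow> y \<in> KH \<Longrightarrow> x \<otimes>\<^bsub>TVB n\<^esub> y \<in> KH"
  by (simp add: H_mult)
lemma KH_one: "\<one>\<^bsub>TVB n\<^esub> \<in> KH" by (simp add: H_one)
lemma H_inv: "x \<in> carrier (TVB n) \<Longrightarrow> phiH x = id \<Longrightarrow> phiH (inv\<^bsub>TVB n\<^esub> x) = id"
  using H_mult[of "inv\<^bsub>TVB n\<^esub> x" x] H_one by simp
lemma KH_inv: "x \<in> KH \<Longrightarrow> inv\<^bsub>TVB n\<^esub> x \<in> KH" by (simp add: H_inv)

lemma P_one: "psiH \<one>\<^bsub>TVB n\<^esub> = \<one>\<^bsub>TVB n\<^esub>"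
proof -
  have "psiH \<one>\<^bsub>TVB n\<^esub> \<otimes>\<^bsub>TVB n\<^esub> psiH \<one>\<^bsub>TVB n\<^esub> = psiH \<one>\<^bsub>TVB n\<^esub>"
    using P_mult[OF KH_one KH_one] by simp
  then show ?thesis using P_c[OF KH_one] by simp
qed

lemma P_inv: "x \<in> KH \<Longrightarrow> psiH x = \<one>\<^bsub>TVB n\<^esub> \<Longrightarrow> psiH (inv\<^bsub>TVB n\<^esub> x) = \<one>\<^bsub>TVB n\<^esub>"
  using P_mult[OF KH_inv, of x x] P_one P_c[OF KH_inv, of x] by simp

lemma T_inv: "x \<in> carrier (TVB n) \<Longrightarrow> phiHT x = \<one>\<^bsub>TVB n\<^esub> \<Longrightarrow> phiHT (inv\<^bsub>TVB n\<^esub> x) = \<one>\<^bsub>TVB n\<^esub>"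
  using T_mult[of "inv\<^bsub>TVB n\<^esub> x" x] T_one T_c[of "inv\<^bsub>TVB n\<^esub> x"] by simp

definition Q :: "tvb_gen word set \<Rightarrow> bool" where
  "Q y \<longleftrightarrow> y \<in> carrier (TVB n) \<and> phiH y = id \<and> psiH y = \<one>\<^bsub>TVB n\<^esub> \<and> phiHT y = \<one>\<^bsub>TVB n\<^esub>"

lemma Q_mult: "Q x \<Longrightarrow> Q y \<Longrightarrow> Q (x \<otimes>\<^bsub>TVB n\<^esub> y)"
  unfolding Q_def using P_mult[of x y] by (simp add: H_mult T_mult)
lemma Q_inv: "Q x \<Longrightarrow> Q (inv\<^bsub>TVB n\<^esub> x)"
  unfolding Q_def using P_inv[of x] by (simp add: H_inv T_inv)
lemma Q_one: "Q \<one>\<^bsub>TVB n\<^esub>"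
  unfolding Q_def by (simp add: H_one P_one T_one)

end


context tvbm begin

lemma vals:
  assumes "1 \<le> i" "i \<le> n - 1"
  shows "phiHT (rho n i) = rho n i" "phiHT (sigma n i) = \<one>\<^bsub>TVB n\<^esub>"
    "phiH (rho n i) = sw i" "phiH (sigma n i) = id"
  using hT hH assms by (auto simp: is_phi_HT_def is_phi_H_def sw_def)

lemma gvals:
  assumes "1 \<le> j" "j \<le> n"
  shows "phiHT (gamma n j) = gamma n j" "phiH (gamma n j) = id" "psiH (gamma n j) = gamma n j"
  using hT hH hP assms by (auto simp: is_phi_HT_def is_phi_H_def is_psi_H_def)

lemma xval: assumes "1 \<le> k" "k \<le> n" "1 \<le> l" "l \<le> n" "k \<noteq> l"
  shows "psiH (X k l) = \<one>\<^bsub>TVB n\<^esub>"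
proof -
  have "psiH (xgen n k l) = \<one>\<^bsub>TVB n\<^esub>" using hP assms unfolding is_psi_H_def by blast
  then show ?thesis using X_xgen[OF assms] by simp
qed

lemma T_R: "okl L \<Longrightarrow> phiHT (R L) = R L"
  by (induction L) (auto simp: R_Cons T_mult T_one r_c vals)
lemma H_R: "okl L \<Longrightarrow> phiH (R L) = pm L"
  by (induction L) (auto simp: R_Cons H_mult H_one r_c vals pm_Cons)
lemma T_Gp: "okg a \<Longrightarrow> phiHT (Gp a) = Gp a"
  by (induction a) (auto simp: Gp_Cons T_mult T_one g_c gvals)
lemma H_Gp: "okg a \<Longrightarrow> phiH (Gp a) = id"
  by (induction a) (auto simp: Gp_Cons H_mult H_one g_c gvals)
lemma P_Gp: "okg a \<Longrightarrow> psiH (Gp a) = Gp a"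
proof (induction a)
  case Nil then show ?case by (simp add: P_one)
next
  case (Cons j a)
  have "gamma n j \<in> KH" "Gp a \<in> KH" using Cons.prems by (auto simp: g_c gvals H_Gp)
  then show ?case using Cons by (simp add: Gp_Cons P_mult gvals)
qed

lemma H_conj: "t \<in> carrier (TVB n) \<Longrightarrow> x \<in> carrier (TVB n) \<Longrightarrow> phiH x = id \<Longrightarrow> phiH (conj t x) = id"
  using H_mult[of t "inv\<^bsub>TVB n\<^esub> t"] by (simp add: conj_def H_mult H_one)
lemma T_conj: "t \<in> carrier (TVB n) \<Longrightarrow> x \<in> carrier (TVB n) \<Longrightarrow> phiHT x = \<one>\<^bsub>TVB n\<^esub> \<Longrightarrow>
    phiHT (conj t x) = \<one>\<^bsub>TVB n\<^esub>"
proof -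
  assume a: "t \<in> carrier (TVB n)" "x \<in> carrier (TVB n)" "phiHT x = \<one>\<^bsub>TVB n\<^esub>"
  have "phiHT (conj t x) = phiHT t \<otimes>\<^bsub>TVB n\<^esub> phiHT x \<otimes>\<^bsub>TVB n\<^esub> phiHT (inv\<^bsub>TVB n\<^esub> t)"
    unfolding conj_def using a by (simp add: T_mult)
  also have "\<dots> = phiHT t \<otimes>\<^bsub>TVB n\<^esub> phiHT (inv\<^bsub>TVB n\<^esub> t)" using a T_c by simp
  also have "\<dots> = phiHT (t \<otimes>\<^bsub>TVB n\<^esub> inv\<^bsub>TVB n\<^esub> t)" using a by (simp only: T_mult inv_closed)
  finally show ?thesis using a by (simp add: T_one)
qed
lemma P_conj: "t \<in> KH \<Longrightarrow> x \<in> KH \<Longrightarrow> psiH x = \<one>\<^bsub>TVB n\<^esub> \<Longrightarrow> psiH (conj t x) = \<one>\<^bsub>TVB n\<^esub>"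
proof -
  assume a: "t \<in> KH" "x \<in> KH" "psiH x = \<one>\<^bsub>TVB n\<^esub>"
  have i: "inv\<^bsub>TVB n\<^esub> t \<in> KH" using KH_inv a by blast
  have "psiH (conj t x) = psiH t \<otimes>\<^bsub>TVB n\<^esub> psiH x \<otimes>\<^bsub>TVB n\<^esub> psiH (inv\<^bsub>TVB n\<^esub> t)"
    unfolding conj_def using a i KH_mult by (simp add: P_mult)
  also have "\<dots> = psiH t \<otimes>\<^bsub>TVB n\<^esub> psiH (inv\<^bsub>TVB n\<^esub> t)" using a i P_c by simp
  also have "\<dots> = psiH (t \<otimes>\<^bsub>TVB n\<^esub> inv\<^bsub>TVB n\<^esub> t)" using a i by (simp only: P_mult)
  finally show ?thesis using a by (simp add: P_one)
qed

lemma C: assumes "okg a" "okl L" "1 \<le> i" "i \<le> n - 1"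
  shows "Q (conj (Gp a \<otimes>\<^bsub>TVB n\<^esub> R L) (sigma n i))"
proof -
  have c: "Gp a \<in> carrier (TVB n)" "R L \<in> carrier (TVB n)" "sigma n i \<in> carrier (TVB n)"
    using assms by (auto simp: s_c)
  obtain k l where kl: "1 \<le> k" "k \<le> n" "1 \<le> l" "l \<le> n" "k \<noteq> l" "conj (R L) (sigma n i) = X k l"
    using H[OF assms(2-4)] by blast
  have e: "conj (Gp a \<otimes>\<^bsub>TVB n\<^esub> R L) (sigma n i) = conj (Gp a) (X k l)"
    using c kl by (simp add: conj_mult)
  have xc: "X k l \<in> carrier (TVB n)" unfolding kl(6)[symmetric] using c by simp
  have xk: "X k l \<in> KH"
    using xc H_conj[of "R L" "sigma n i"] c kl assms vals by simp
  have gk: "Gp a \<in> KH" using assms by (simp add: H_Gp)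
  have "psiH (conj (Gp a) (X k l)) = \<one>\<^bsub>TVB n\<^esub>"
    by (rule P_conj[OF gk xk]) (use xval kl in simp)
  moreover have "phiH (conj (Gp a \<otimes>\<^bsub>TVB n\<^esub> R L) (sigma n i)) = id"
    using c assms by (intro H_conj) (auto simp: vals)
  moreover have "phiHT (conj (Gp a \<otimes>\<^bsub>TVB n\<^esub> R L) (sigma n i)) = \<one>\<^bsub>TVB n\<^esub>"
    using c assms by (intro T_conj) (auto simp: vals)
  ultimately show ?thesis unfolding Q_def e using c xc by simp
qed

end


context tvbm begin

lemma g_inv: "1 \<le> j \<Longrightarrow> j \<le> n \<Longrightarrow> inv\<^bsub>TVB n\<^esub> (gamma n j) = gamma n j"
  using inv_equality[OF gg] g_c by blast

lemma ex3I: "Q y \<Longrightarrow> okg a \<Longrightarrow> okl L \<Longrightarrow> zz = y \<otimes>\<^bsub>TVB n\<^esub> (Gp a \<otimes>\<^bsub>TVB n\<^esub> R L) \<Longrightarrow>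
  \<exists>y a L. Q y \<and> okg a \<and> okl L \<and> zz = y \<otimes>\<^bsub>TVB n\<^esub> (Gp a \<otimes>\<^bsub>TVB n\<^esub> R L)"
  by blast

lemma D: "w \<in> words_on (tvb_gens n) \<Longrightarrow>
  \<exists>y a L. Q y \<and> okg a \<and> okl L \<and> tvb_elt n w = y \<otimes>\<^bsub>TVB n\<^esub> (Gp a \<otimes>\<^bsub>TVB n\<^esub> R L)"
proof (induction w rule: rev_induct)
  case Nil
  have e: "tvb_elt n [] = \<one>\<^bsub>TVB n\<^esub> \<otimes>\<^bsub>TVB n\<^esub> (Gp [] \<otimes>\<^bsub>TVB n\<^esub> R [])" by (simp add: tvb_one[symmetric])
  show ?case by (rule ex3I[OF Q_one _ _ e]) auto
next
  case (snoc p w)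
  obtain x b where p: "p = (x, b)" by force
  have xg: "x \<in> tvb_gens n" and ww: "w \<in> words_on (tvb_gens n)" using snoc.prems p by auto
  obtain y a L where IH: "Q y" "okg a" "okl L" "tvb_elt n w = y \<otimes>\<^bsub>TVB n\<^esub> (Gp a \<otimes>\<^bsub>TVB n\<^esub> R L)"
    using snoc.IH ww by blast
  define t where "t = Gp a \<otimes>\<^bsub>TVB n\<^esub> R L"
  have tc: "t \<in> carrier (TVB n)" using IH by (simp add: t_def)
  have yc: "y \<in> carrier (TVB n)" using IH by (simp add: Q_def)
  have ew: "[(x, b)] \<in> words_on (tvb_gens n)" using xg by simp
  define e where "e = tvb_elt n [(x, b)]"
  have ec: "e \<in> carrier (TVB n)" using ew by (simp add: e_def elt_c)
  have sp: "tvb_elt n (w @ [p]) = y \<otimes>\<^bsub>TVB n\<^esub> t \<otimes>\<^bsub>TVB n\<^esub> e"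
    using tvb_mult[OF ww ew] IH(4) p by (simp add: t_def e_def)
  have eb: "e = (if b then tvb_elt n [(x, True)] else inv\<^bsub>TVB n\<^esub> (tvb_elt n [(x, True)]))"
    using tvb_inv[OF xg] by (cases b) (auto simp: e_def)
  show ?case
  proof (cases x)
    case (Sig i)
    have i: "1 \<le> i" "i \<le> n - 1" using xg Sig by auto
    have sc: "sigma n i \<in> carrier (TVB n)" using i by (simp add: s_c)
    have e': "e = (if b then sigma n i else inv\<^bsub>TVB n\<^esub> (sigma n i))" using eb Sig by (simp add: sigma_def)
    have Qc: "Q (conj t e)"
    proof (cases b)
      case True then show ?thesis using e' C[OF IH(2,3) i] by (simp add: t_def)
    next
      case False
      then have "conj t e = inv\<^bsub>TVB n\<^esub> (conj t (sigma n i))" using e' tc sc by (simp add: conj_inv)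
      then show ?thesis using Q_inv[OF C[OF IH(2,3) i]] by (simp add: t_def)
    qed
    have "y \<otimes>\<^bsub>TVB n\<^esub> t \<otimes>\<^bsub>TVB n\<^esub> e = (y \<otimes>\<^bsub>TVB n\<^esub> conj t e) \<otimes>\<^bsub>TVB n\<^esub> t"
      using yc tc ec conj_shift[OF tc ec] by (simp add: m_assoc)
    then show ?thesis using sp unfolding t_def by (intro ex3I[OF Q_mult[OF IH(1) Qc] IH(2) IH(3)]) (simp add: t_def)
  next
    case (Rho i)
    have i: "1 \<le> i" "i \<le> n - 1" using xg Rho by auto
    have e': "e = rho n i" using eb Rho i by (simp add: rho_def[symmetric] r_inv)
    have "y \<otimes>\<^bsub>TVB n\<^esub> t \<otimes>\<^bsub>TVB n\<^esub> e = y \<otimes>\<^bsub>TVB n\<^esub> (Gp a \<otimes>\<^bsub>TVB n\<^esub> R (L @ [i]))"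
      using yc IH i e' by (simp add: t_def R_snoc m_assoc r_c)
    moreover have "okl (L @ [i])" using IH i by auto
    ultimately show ?thesis using sp by (intro ex3I[OF IH(1) IH(2)]) simp_all
  next
    case (Gam j)
    have j: "1 \<le> j" "j \<le> n" using xg Gam by auto
    have e': "e = gamma n j" using eb Gam j by (simp add: gamma_def[symmetric] g_inv)
    have pr: "1 \<le> pm L j" "pm L j \<le> n" using pm_range[of L n j] IH j by auto
    have "y \<otimes>\<^bsub>TVB n\<^esub> t \<otimes>\<^bsub>TVB n\<^esub> e = y \<otimes>\<^bsub>TVB n\<^esub> (Gp a \<otimes>\<^bsub>TVB n\<^esub> (R L \<otimes>\<^bsub>TVB n\<^esub> gamma n j))"
      using yc IH j e' by (simp add: t_def m_assoc g_c)
    also have "\<dots> = y \<otimes>\<^bsub>TVB n\<^esub> (Gp a \<otimes>\<^bsub>TVB n\<^esub> (gamma n (pm L j) \<otimes>\<^bsub>TVB n\<^esub> R L))"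
      using F[OF IH(3) j] by simp
    also have "\<dots> = y \<otimes>\<^bsub>TVB n\<^esub> (Gp (a @ [pm L j]) \<otimes>\<^bsub>TVB n\<^esub> R L)"
      using IH pr by (simp add: Gp_snoc m_assoc g_c)
    finally have "tvb_elt n (w @ [p]) = y \<otimes>\<^bsub>TVB n\<^esub> (Gp (a @ [pm L j]) \<otimes>\<^bsub>TVB n\<^esub> R L)" using sp by simp
    moreover have "okg (a @ [pm L j])" using IH pr by auto
    ultimately show ?thesis by (intro ex3I[OF IH(1) _ IH(3)])
  qed
qed

lemma E: assumes "okg a" "okl L" "phiH (Gp a \<otimes>\<^bsub>TVB n\<^esub> R L) = id"
    "psiH (Gp a \<otimes>\<^bsub>TVB n\<^esub> R L) = \<one>\<^bsub>TVB n\<^esub>"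
  shows "Gp a \<otimes>\<^bsub>TVB n\<^esub> R L = \<one>\<^bsub>TVB n\<^esub>"
proof -
  have "pm L = id" using assms H_mult[of "Gp a" "R L"] H_Gp H_R by simp
  then have "R L = \<one>\<^bsub>TVB n\<^esub>"
    using coxeter[of phiH "n - 1" L] H_R H_mult assms by auto
  then show ?thesis using assms P_Gp by simp
qed

lemma kernels_eq: "kernel (TVB n) (TS n) phiHT = kernel (TVH n phiH) (A n) psiH"
proof -
  have K1: "kernel (TVB n) (TS n) phiHT = {x \<in> carrier (TVB n). phiHT x = \<one>\<^bsub>TVB n\<^esub>}"
    by (simp add: kernel_def TS_ops)
  have K2: "kernel (TVH n phiH) (A n) psiH = {x \<in> KH. psiH x = \<one>\<^bsub>TVB n\<^esub>}"
    by (simp add: kernel_def TVH_ops A_ops)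
  have dec: "\<exists>y a L. Q y \<and> okg a \<and> okl L \<and> x = y \<otimes>\<^bsub>TVB n\<^esub> (Gp a \<otimes>\<^bsub>TVB n\<^esub> R L)"
    if "x \<in> carrier (TVB n)" for x
  proof -
    have "x \<in> tvb_elt n ` words_on (tvb_gens n)" using that tvb_carrier[of n] by simp
    then obtain w where "w \<in> words_on (tvb_gens n)" "x = tvb_elt n w" by blast
    then show ?thesis using D by blast
  qed
  show ?thesis unfolding K1 K2
  proof (intro equalityI subsetI)
    fix x assume x: "x \<in> {x \<in> carrier (TVB n). phiHT x = \<one>\<^bsub>TVB n\<^esub>}"
    then obtain y a L where d: "Q y" "okg a" "okl L" "x = y \<otimes>\<^bsub>TVB n\<^esub> (Gp a \<otimes>\<^bsub>TVB n\<^esub> R L)"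
      using dec by blast
    have yc: "y \<in> carrier (TVB n)" using d by (simp add: Q_def)
    have "phiHT x = Gp a \<otimes>\<^bsub>TVB n\<^esub> R L"
      using d yc by (simp add: T_mult T_Gp T_R Q_def)
    then have "Gp a \<otimes>\<^bsub>TVB n\<^esub> R L = \<one>\<^bsub>TVB n\<^esub>" using x by simp
    then have "x = y" using d yc by simp
    then show "x \<in> {x \<in> KH. psiH x = \<one>\<^bsub>TVB n\<^esub>}" using d by (simp add: Q_def)
  next
    fix x assume x: "x \<in> {x \<in> KH. psiH x = \<one>\<^bsub>TVB n\<^esub>}"
    then obtain y a L where d: "Q y" "okg a" "okl L" "x = y \<otimes>\<^bsub>TVB n\<^esub> (Gp a \<otimes>\<^bsub>TVB n\<^esub> R L)"
      using dec by blast
    have yc: "y \<in> carrier (TVB n)" using d by (simp add: Q_def)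
    define t where "t = Gp a \<otimes>\<^bsub>TVB n\<^esub> R L"
    have tc: "t \<in> carrier (TVB n)" using d by (simp add: t_def)
    have te: "t = inv\<^bsub>TVB n\<^esub> y \<otimes>\<^bsub>TVB n\<^esub> x" using d yc tc by (simp add: t_def m_assoc[symmetric])
    have Qi: "Q (inv\<^bsub>TVB n\<^esub> y)" using Q_inv d by blast
    have iy: "inv\<^bsub>TVB n\<^esub> y \<in> KH" using Qi by (simp add: Q_def)
    have "phiH t = id" unfolding te using Qi x by (simp add: H_mult Q_def)
    moreover have "psiH t = \<one>\<^bsub>TVB n\<^esub>" unfolding te using Qi x iy by (simp add: P_mult Q_def)
    ultimately have "t = \<one>\<^bsub>TVB n\<^esub>" using E d unfolding t_def by blast
    then have "x = y" using d yc by (simp add: t_def)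
    then show "x \<in> {x \<in> carrier (TVB n). phiHT x = \<one>\<^bsub>TVB n\<^esub>}" using d by (simp add: Q_def)
  qed
qed

end

theorem mainTheorem19:
  fixes n :: nat
    and phiHT :: "tvb_gen word set \<Rightarrow> tvb_gen word set"
    and phiH :: "tvb_gen word set \<Rightarrow> nat \<Rightarrow> nat"
    and psiH :: "tvb_gen word set \<Rightarrow> tvb_gen word set"
  assumes "n \<ge> 2"
    and "is_phi_HT n phiHT"
    and "is_phi_H n phiH"
    and "is_psi_H n phiH psiH"
  shows "(TVB n)\<lparr>carrier := kernel (TVB n) (TS n) phiHT\<rparr>
           \<cong> (TVB n)\<lparr>carrier := kernel (TVH n phiH) (A n) psiH\<rparr>"
proof -
  interpret tvbm n phiHT phiH psiH
    by unfold_locales (use assms in auto)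
  show ?thesis using kernels_eq by simp
qed



end
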